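(* Let $\lambda\neq 0$ with $\operatorname{Re}\lambda\ge 0$ be an eigenvalue of the problem \[ \lambda p = p_{\xi\xi}+c\,p_\xi+F_w(\widehat w)\,\widehat y\,(hp-(1-h)q)+F(\widehat w)\,q,\qquad \lambda q = \varepsilon q_{\xi\xi}+c\,q_\xi-F_w(\widehat w)\,\widehat y\,(hp-(1-h)q)-F(\widehat w)\,q, \] i.e. there is a nonzero $(p,q)\in H^2(\mathbb{R})\times H^2(\mathbb{R})$ solving it. Then \[ \operatorname{Re}\lambda\le\Big(3-\frac{3h}{2}\Big)\sup_{\xi\in\mathbb{R}}\big(F_w(\widehat w(\xi))\,\widehat y(\xi)\big)+e^{Z(1-h)}, \] and \[ |\lambda|\le\frac{c^2}{4}\max\Big\{1,\frac{1}{\varepsilon}\Big\}+(3-h)\sup_{\xi\in\mathbb{R}}\big(F_w(\widehat w(\xi))\,\widehat y(\xi)\big)+e^{Z(1-h)} . \]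
   Context: Parameters: $\varepsilon\in(0,1)$, $h\in(0,1)$, Zeldovich number $Z>0$, $\sigma\in(0,1)$, ignition temperature $T_{ign}>0$ and $\delta>0$ with $T_{ign}+2\delta<1$. The reaction rate $F=F_\delta$ is \[ F(v)=\begin{cases}\exp\!\Big(Z\frac{v-h}{\sigma+(1-\sigma)v}\Big), & v\ge T_{ign}+2\delta,\\[2pt] \exp\!\Big(Z\frac{v-h}{\sigma+(1-\sigma)v}\Big)H^\delta(v-T_{ign}-\delta), & T_{ign}\le v<T_{ign}+2\delta,\\[2pt] 0, & v<T_{ign},\end{cases} \] where $H^\delta(x)=1/(1+e^{4x\delta/(\delta^2-x^2)})$ for $|x|<\delta$, $H^\delta(x)=1$ for $x\ge\delta$, $H^\delta(x)=0$ for $x\le-\delta$. $F$ is nonnegative and nondecreasing (so $F(1)=e^{Z(1-h)}$ is its maximum on $[0,1]$), and $F_w$ denotes its derivative (so $F_w\ge 0$). $c>0$ and $(\widehat u,\widehat y)$ is a traveling front, i.e. a solution of $u''+cu'+yF(hu+(1-h)(1-y))=0$, $\varepsilon y''+cy'-yF(hu+(1-h)(1-y))=0$ with $(u,y)\to(1,0)$ as $\xi\to-\infty$ and $(u,y)\to(0,1)$ as $\xi\to+\infty$; it is assumed that $0\le\widehat y\le 1$ and $0\le \widehat w\le 1$, where $\widehat w=h\widehat u+(1-h)(1-\widehat y)$. *)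

theory Defs
  imports "HOL-Analysis.Analysis"
begin

definition Hdelta :: "real \<Rightarrow> real \<Rightarrow> real" where
  "Hdelta \<delta> x =
     (if x \<ge> \<delta> then 1
      else if x \<le> - \<delta> then 0
      else 1 / (1 + exp (- (4 * x * \<delta> / (\<delta>\<^sup>2 - x\<^sup>2)))))"

definition Frate :: "real \<Rightarrow> real \<Rightarrow> real \<Rightarrow> real \<Rightarrow> real \<Rightarrow> real \<Rightarrow> real" where
  "Frate Z h \<sigma> Tign \<delta> v =
     (if v \<ge> Tign + 2 * \<delta> then exp (Z * (v - h) / (\<sigma> + (1 - \<sigma>) * v))
      else if v \<ge> Tign then exp (Z * (v - h) / (\<sigma> + (1 - \<sigma>) * v)) * Hdelta \<delta> (v - Tign - \<delta>)
      else 0)"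

definition Fw :: "real \<Rightarrow> real \<Rightarrow> real \<Rightarrow> real \<Rightarrow> real \<Rightarrow> real \<Rightarrow> real" where
  "Fw Z h \<sigma> Tign \<delta> v = deriv (Frate Z h \<sigma> Tign \<delta>) v"

definition H2 :: "(real \<Rightarrow> complex) \<Rightarrow> (real \<Rightarrow> complex) \<Rightarrow> (real \<Rightarrow> complex) \<Rightarrow> bool" where
  "H2 p p' p'' \<longleftrightarrow>
     (\<forall>x. (p has_vector_derivative p' x) (at x)) \<and>
     (\<forall>x. (p' has_vector_derivative p'' x) (at x)) \<and>
     p \<in> borel_measurable lborel \<and> p' \<in> borel_measurable lborel \<and> p'' \<in> borel_measurable lborel \<and>
     integrable lborel (\<lambda>x. (cmod (p x))\<^sup>2) \<and>
     integrable lborel (\<lambda>x. (cmod (p' x))\<^sup>2) \<and>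
     integrable lborel (\<lambda>x. (cmod (p'' x))\<^sup>2)"

end

theory Submission
  imports Defs "HOL-Real_Asymp.Real_Asymp"
begin
definition sfun :: "real \<Rightarrow> real" where "sfun z = 4*z/(1-z\<^sup>2)"
definition H1 :: "real \<Rightarrow> real" where
  "H1 z = (if z \<ge> 1 then 1 else if z \<le> -1 then 0 else 1/(1+exp(-(sfun z))))"
definition D1 :: "real \<Rightarrow> real" where
  "D1 z = (if \<bar>z\<bar> < 1 then exp(-(sfun z)) * (4*(1+z\<^sup>2)/(1-z\<^sup>2)\<^sup>2) / (1+exp(-(sfun z)))\<^sup>2 else 0)"

lemma sfun_deriv: assumes "\<bar>z\<bar> < 1"
  shows "(sfun has_real_derivative (4*(1+z\<^sup>2)/(1-z\<^sup>2)\<^sup>2)) (at z)"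
proof -
  have "z\<^sup>2 < 1" using assms by (simp add: abs_square_less_1)
  then have ne: "1 - z\<^sup>2 \<noteq> 0" by simp
  show ?thesis unfolding sfun_def[abs_def]
    apply (rule derivative_eq_intros refl | simp add: ne)+
    using ne by (auto simp: power2_eq_square)
qed

lemma H1_inner_deriv: assumes "\<bar>z\<bar> < 1"
  shows "((\<lambda>z. 1/(1+exp(-(sfun z)))) has_real_derivative D1 z) (at z)"
proof -
  have pos: "1 + exp(-(sfun z)) \<noteq> 0" by (smt (verit) exp_gt_zero)
  have "((\<lambda>z. 1/(1+exp(-(sfun z)))) has_real_derivative
     (- (exp(-(sfun z)) * (- (4*(1+z\<^sup>2)/(1-z\<^sup>2)\<^sup>2))) / (1+exp(-(sfun z)))\<^sup>2)) (at z)"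
    using pos by (auto intro!: derivative_eq_intros sfun_deriv[OF assms] simp: power2_eq_square)
  then show ?thesis using assms by (simp add: D1_def)
qed

lemma H1_deriv: "(H1 has_real_derivative D1 z) (at z)"
proof -
  consider "z > 1" | "z < -1" | "\<bar>z\<bar> < 1" | "z = 1" | "z = -1" by linarith
  then show ?thesis
  proof cases
    case 1
    have "((\<lambda>_. 1::real) has_real_derivative 0) (at z)" by (rule DERIV_const)
    then have "(H1 has_real_derivative 0) (at z)"
      by (rule has_field_derivative_transform_within_open[where S="{1<..}"]) (use 1 in \<open>auto simp: H1_def\<close>)
    then show ?thesis using 1 by (simp add: D1_def)
  next
    case 2
    have "((\<lambda>_. 0::real) has_real_derivative 0) (at z)" by (rule DERIV_const)
    then have "(H1 has_real_derivative 0) (at z)"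
      by (rule has_field_derivative_transform_within_open[where S="{..<-1}"]) (use 2 in \<open>auto simp: H1_def\<close>)
    then show ?thesis using 2 by (simp add: D1_def)
  next
    case 3
    show ?thesis
      apply (rule has_field_derivative_transform_within_open[OF H1_inner_deriv[OF 3], where S="{-1<..<1}"])
      using 3 by (auto simp: H1_def)
  next
    case 4
    have "((\<lambda>y. (H1 y - H1 1) / (y - 1)) \<longlongrightarrow> 0) (at 1)"
    proof (rule filterlim_split_at)
      have "((\<lambda>y::real. (1/(1+exp(-(4*y/(1-y\<^sup>2)))) - 1)/(y-1)) \<longlongrightarrow> 0) (at_left 1)"
        by real_asymp
      moreover have "eventually (\<lambda>y. (1/(1+exp(-(4*y/(1-y\<^sup>2)))) - 1)/(y-1) = (H1 y - H1 1) / (y - 1)) (at_left (1::real))"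
        unfolding eventually_at_left_field
        by (rule exI[of _ "-1"]) (simp add: H1_def sfun_def)
      ultimately show "((\<lambda>y. (H1 y - H1 1) / (y - 1)) \<longlongrightarrow> 0) (at_left 1)"
        by (rule Lim_transform_eventually)
      have "eventually (\<lambda>y. 0 = (H1 y - H1 1) / (y - 1)) (at_right (1::real))"
        unfolding eventually_at_right_field
        by (rule exI[of _ "2"]) (auto simp: H1_def)
      then show "((\<lambda>y. (H1 y - H1 1) / (y - 1)) \<longlongrightarrow> 0) (at_right 1)"
        by (rule Lim_transform_eventually[OF tendsto_const])
    qed
    then show ?thesis using 4 by (simp add: has_field_derivative_iff D1_def)
  next
    case 5
    have "((\<lambda>y. (H1 y - H1 (-1)) / (y - (-1))) \<longlongrightarrow> 0) (at (-1))"
    proof (rule filterlim_split_at)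
      have "((\<lambda>y::real. (1/(1+exp(-(4*y/(1-y\<^sup>2)))))/(y+1)) \<longlongrightarrow> 0) (at_right (-1))"
        by real_asymp
      moreover have "eventually (\<lambda>y. (1/(1+exp(-(4*y/(1-y\<^sup>2)))))/(y+1) = (H1 y - H1 (-1)) / (y - (-1))) (at_right (-1::real))"
        unfolding eventually_at_right_field
        by (rule exI[of _ "1"]) (simp add: H1_def sfun_def)
      ultimately show "((\<lambda>y. (H1 y - H1 (-1)) / (y - (-1))) \<longlongrightarrow> 0) (at_right (-1))"
        by (rule Lim_transform_eventually)
      have "eventually (\<lambda>y. 0 = (H1 y - H1 (-1)) / (y - (-1))) (at_left (-1::real))"
        unfolding eventually_at_left_field
        by (rule exI[of _ "-2"]) (auto simp: H1_def)
      then show "((\<lambda>y. (H1 y - H1 (-1)) / (y - (-1))) \<longlongrightarrow> 0) (at_left (-1))"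
        by (rule Lim_transform_eventually[OF tendsto_const])
    qed
    then show ?thesis using 5 by (simp add: has_field_derivative_iff D1_def)
  qed
qed

lemma exp_sym_aux: "x > 0 \<Longrightarrow> x / (1 + x)\<^sup>2 = (1/x) / (1 + 1/x)\<^sup>2" for x :: real
proof -
  assume x: "x > 0"
  have "1 + 1/x = (1+x)/x" using x by (simp add: field_simps)
  then have "(1/x) / (1 + 1/x)\<^sup>2 = (1/x) / ((1+x)\<^sup>2/x\<^sup>2)" by (simp add: power_divide)
  also have "\<dots> = x / (1+x)\<^sup>2" using x by (simp add: divide_simps power2_eq_square)
  finally show ?thesis by simp
qed
lemma isCont_open_transform: assumes "isCont g x" "open S" "x \<in> S" "\<And>y. y \<in> S \<Longrightarrow> f y = g y" shows "isCont f x"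
proof -
  have "eventually (\<lambda>y. f y = g y) (nhds x)" unfolding eventually_nhds using assms(2-4) by blast
  then show ?thesis using isCont_cong assms(1) by blast
qed

lemma D1_even: "D1 (- z) = D1 z"
proof -
  have s: "sfun (-z) = - sfun z" by (simp add: sfun_def)
  have "exp t * K / (1 + exp t)\<^sup>2 = exp (-t) * K / (1 + exp (-t))\<^sup>2" for t K :: real
  proof -
    have "exp t / (1 + exp t)\<^sup>2 = exp (-t) / (1 + exp (-t))\<^sup>2"
      using exp_sym_aux[of "exp t"] by (simp add: exp_minus inverse_eq_divide)
    then have "exp t / (1 + exp t)\<^sup>2 * K = exp (-t) / (1 + exp (-t))\<^sup>2 * K" by simp
    then show ?thesis by simp
  qed
  note key = this[of "sfun z" "4*(1+z\<^sup>2)/(1-z\<^sup>2)\<^sup>2"]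
  have "D1 (-z) = (if \<bar>z\<bar> < 1 then exp (sfun z) * (4*(1+z\<^sup>2)/(1-z\<^sup>2)\<^sup>2) / (1+exp(sfun z))\<^sup>2 else 0)"
    by (simp only: D1_def s abs_minus_cancel power2_minus minus_minus)
  also have "\<dots> = D1 z" unfolding D1_def by (simp only: key)
  finally show ?thesis .
qed

lemma D1_cont: "isCont D1 z"
proof -
  have c1: "isCont D1 1"
  proof -
    have "(D1 \<longlongrightarrow> 0) (at 1)"
    proof (rule filterlim_split_at)
      have "((\<lambda>z::real. exp(-(4*z/(1-z\<^sup>2))) * (4*(1+z\<^sup>2)/(1-z\<^sup>2)\<^sup>2) / (1+exp(-(4*z/(1-z\<^sup>2))))\<^sup>2) \<longlongrightarrow> 0) (at_left 1)"
        by real_asymp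
      moreover have "eventually (\<lambda>z. exp(-(4*z/(1-z\<^sup>2))) * (4*(1+z\<^sup>2)/(1-z\<^sup>2)\<^sup>2) / (1+exp(-(4*z/(1-z\<^sup>2))))\<^sup>2 = D1 z) (at_left (1::real))"
        unfolding eventually_at_left_field
        by (rule exI[of _ "-1"]) (auto simp: D1_def sfun_def)
      ultimately show "(D1 \<longlongrightarrow> 0) (at_left 1)"
        by (rule Lim_transform_eventually)
      have "eventually (\<lambda>y. 0 = D1 y) (at_right (1::real))"
        unfolding eventually_at_right_field
        by (rule exI[of _ "2"]) (auto simp: D1_def)
      then show "(D1 \<longlongrightarrow> 0) (at_right 1)"
        by (rule Lim_transform_eventually[OF tendsto_const])
    qed
    then show ?thesis by (simp add: isCont_def D1_def)
  qed
  consider "z > 1" | "z < -1" | "\<bar>z\<bar> < 1" | "z = 1" | "z = -1" by linarith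
  then show ?thesis
  proof cases
    case 1
    have "isCont (\<lambda>_. 0::real) z" by simp
    then show ?thesis
      apply (rule isCont_open_transform[where S="{1<..}"]) using 1 by (auto simp: D1_def)
  next
    case 2
    have "isCont (\<lambda>_. 0::real) z" by simp
    then show ?thesis
      apply (rule isCont_open_transform[where S="{..<-1}"]) using 2 by (auto simp: D1_def)
  next
    case 3
    have "z\<^sup>2 < 1" using 3 by (simp add: abs_square_less_1)
    then have ne: "1 - z\<^sup>2 \<noteq> 0" by simp
    have e: "\<And>t::real. 1 + exp t \<noteq> 0" by (smt (verit) exp_gt_zero)
    have "isCont (\<lambda>z. exp(-(4*z/(1-z\<^sup>2))) * (4*(1+z\<^sup>2)/(1-z\<^sup>2)\<^sup>2) / (1+exp(-(4*z/(1-z\<^sup>2))))\<^sup>2) z"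
      using ne e by (intro continuous_intros) auto
    then show ?thesis
      apply (rule isCont_open_transform[where S="{-1<..<1}"]) using 3 by (auto simp: D1_def sfun_def)
  next
    case 4
    then show ?thesis using c1 by simp
  next
    case 5
    have "isCont (\<lambda>z. D1 (- z)) (-1)"
      using isCont_o2[where f="\<lambda>z::real. - z" and a="-1" and g=D1] c1 by auto
    moreover have "D1 (- z) = D1 z" for z by (rule D1_even)
    ultimately show ?thesis using 5 by simp
  qed
qed

lemma D1_nonneg: "D1 z \<ge> 0"
  unfolding D1_def by (auto intro!: divide_nonneg_nonneg mult_nonneg_nonneg)

lemma H1_bounds: "0 \<le> H1 z" "H1 z \<le> 1"
  unfolding H1_def by (auto simp: add_pos_pos)

lemma Hdelta_H1: assumes "\<delta> > 0" shows "Hdelta \<delta> x = H1 (x/\<delta>)"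
proof -
  have "\<bar>x\<bar> < \<delta> \<Longrightarrow> 4 * x * \<delta> / (\<delta>\<^sup>2 - x\<^sup>2) = sfun (x/\<delta>)"
    using assms unfolding sfun_def by (simp add: field_simps power2_eq_square)
  then show ?thesis using assms unfolding Hdelta_def H1_def
    by (auto simp: field_simps)
qed

lemma H1_chain [derivative_intros]:
  "(f has_real_derivative f') (at x) \<Longrightarrow> ((\<lambda>x. H1 (f x)) has_real_derivative D1 (f x) * f') (at x)"
  by (rule DERIV_chain2[OF H1_deriv])

lemma Frate_eq:
  assumes "\<delta> > 0"
  shows "Frate Z h \<sigma> T \<delta> v = exp (Z * (v - h) / (\<sigma> + (1 - \<sigma>) * v)) * H1 ((v - T - \<delta>) / \<delta>)"
proof -
  have e: "Hdelta \<delta> (v - T - \<delta>) = H1 ((v - T - \<delta>) / \<delta>)" using Hdelta_H1[OF assms] by simp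
  have a: "v \<ge> T + 2*\<delta> \<Longrightarrow> H1 ((v - T - \<delta>) / \<delta>) = 1"
    using assms by (simp add: H1_def field_simps)
  have b: "v < T \<Longrightarrow> H1 ((v - T - \<delta>) / \<delta>) = 0"
    using assms by (simp add: H1_def field_simps)
  show ?thesis
  proof (cases "v \<ge> T + 2*\<delta>")
    case True
    then show ?thesis unfolding Frate_def using a by simp
  next
    case False
    show ?thesis
    proof (cases "v \<ge> T")
      case True
      then show ?thesis unfolding Frate_def using False e by simp
    next
      case c: False
      then show ?thesis unfolding Frate_def using False b by simp
    qed
  qed
qed

definition Fw0 :: "real \<Rightarrow> real \<Rightarrow> real \<Rightarrow> real \<Rightarrow> real \<Rightarrow> real \<Rightarrow> real" where
  "Fw0 Z h \<sigma> T \<delta> v = exp (Z * (v - h) / (\<sigma> + (1 - \<sigma>) * v)) *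
     (Z * (\<sigma> + (1 - \<sigma>) * h) / (\<sigma> + (1 - \<sigma>) * v)\<^sup>2 * H1 ((v - T - \<delta>) / \<delta>)
      + D1 ((v - T - \<delta>) / \<delta>) / \<delta>)"

lemma Frate_deriv:
  assumes "\<delta> > 0" "\<sigma> + (1 - \<sigma>) * v \<noteq> 0"
  shows "(Frate Z h \<sigma> T \<delta> has_real_derivative Fw0 Z h \<sigma> T \<delta> v) (at v)"
proof -
  let ?d = "\<sigma> + (1 - \<sigma>) * v"
  have "((\<lambda>v. exp (Z * (v - h) / (\<sigma> + (1 - \<sigma>) * v)) * H1 ((v - T - \<delta>) / \<delta>)) has_real_derivative
     Fw0 Z h \<sigma> T \<delta> v) (at v)"
  proof -
    have dg: "((\<lambda>v. Z * (v - h) / (\<sigma> + (1 - \<sigma>) * v)) has_real_derivative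
        Z * (\<sigma> + (1 - \<sigma>) * h) / (\<sigma> + (1 - \<sigma>) * v)\<^sup>2) (at v)"
    proof -
      have "((\<lambda>v. Z * (v - h) / (\<sigma> + (1 - \<sigma>) * v)) has_real_derivative
        ((Z * 1) * (\<sigma> + (1 - \<sigma>) * v) - Z * (v - h) * (1 - \<sigma>)) / ((\<sigma> + (1 - \<sigma>) * v) * (\<sigma> + (1 - \<sigma>) * v))) (at v)"
      proof -
        have d1: "((\<lambda>x. x - h) has_real_derivative 1) (at v)" using DERIV_diff[OF DERIV_ident DERIV_const[of h]] by simp
        have d2: "((\<lambda>x. \<sigma> + (1-\<sigma>)*x) has_real_derivative 1 - \<sigma>) (at v)"
          using DERIV_add[OF DERIV_const[of \<sigma>] DERIV_cmult[OF DERIV_ident, of "1-\<sigma>"]] by simp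
        show ?thesis by (rule DERIV_divide[OF DERIV_cmult[OF d1] d2 assms(2)])
      qed
      moreover have "((Z * 1) * (\<sigma> + (1 - \<sigma>) * v) - Z * (v - h) * (1 - \<sigma>)) = Z * (\<sigma> + (1 - \<sigma>) * h)"
        by (simp add: algebra_simps)
      ultimately show ?thesis by (simp add: power2_eq_square)
    qed
    have dH: "((\<lambda>v. H1 ((v - T - \<delta>) / \<delta>)) has_real_derivative D1 ((v - T - \<delta>) / \<delta>) * (1 / \<delta>)) (at v)"
    proof -
      have "((\<lambda>v. (v - T - \<delta>) / \<delta>) has_real_derivative 1 / \<delta>) (at v)"
        using assms(1) by (auto intro!: derivative_eq_intros)
      then show ?thesis by (rule H1_chain)
    qed
    have "((\<lambda>v. exp (Z * (v - h) / (\<sigma> + (1 - \<sigma>) * v)) * H1 ((v - T - \<delta>) / \<delta>)) has_real_derivative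
       (exp (Z * (v - h) / (\<sigma> + (1 - \<sigma>) * v)) * (Z * (\<sigma> + (1 - \<sigma>) * h) / (\<sigma> + (1 - \<sigma>) * v)\<^sup>2)) * H1 ((v - T - \<delta>) / \<delta>)
        + D1 ((v - T - \<delta>) / \<delta>) * (1 / \<delta>) * exp (Z * (v - h) / (\<sigma> + (1 - \<sigma>) * v))) (at v)"
      by (rule DERIV_mult[OF DERIV_fun_exp[OF dg] dH])
    then show ?thesis
      by (rule DERIV_cong) (simp add: Fw0_def algebra_simps)
  qed
  moreover have "Frate Z h \<sigma> T \<delta> = (\<lambda>v. exp (Z * (v - h) / (\<sigma> + (1 - \<sigma>) * v)) * H1 ((v - T - \<delta>) / \<delta>))"
    using Frate_eq[OF assms(1)] by blast
  ultimately show ?thesis by simp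
qed

lemma Fw_eq:
  assumes "\<delta> > 0" "0 < \<sigma>" "\<sigma> < 1" "v \<ge> 0"
  shows "Fw Z h \<sigma> T \<delta> v = Fw0 Z h \<sigma> T \<delta> v"
proof -
  have "\<sigma> + (1 - \<sigma>) * v > 0" using assms by (simp add: add_pos_nonneg)
  then show ?thesis unfolding Fw_def
    using DERIV_imp_deriv[OF Frate_deriv[OF assms(1), of \<sigma> v Z h T]] by simp
qed

lemma Fw0_nonneg:
  assumes "\<delta> > 0" "0 < \<sigma>" "\<sigma> < 1" "v \<ge> 0" "Z > 0" "0 < h" "h < 1"
  shows "Fw0 Z h \<sigma> T \<delta> v \<ge> 0"
proof -
  have "\<sigma> + (1 - \<sigma>) * h > 0" using assms by (simp add: add_pos_nonneg)
  then show ?thesis unfolding Fw0_def using assms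
    by (auto intro!: mult_nonneg_nonneg add_nonneg_nonneg divide_nonneg_nonneg H1_bounds D1_nonneg)
qed

lemma cont_H1: "continuous_on S f \<Longrightarrow> continuous_on S (\<lambda>x. H1 (f x))"
proof -
  assume f: "continuous_on S f"
  have "continuous_on UNIV H1"
    by (rule continuous_at_imp_continuous_on) (auto intro: DERIV_isCont[OF H1_deriv])
  then show ?thesis using continuous_on_compose2[OF _ f] by blast
qed

lemma cont_D1: "continuous_on S f \<Longrightarrow> continuous_on S (\<lambda>x. D1 (f x))"
proof -
  assume f: "continuous_on S f"
  have "continuous_on UNIV D1"
    by (rule continuous_at_imp_continuous_on) (auto intro: D1_cont)
  then show ?thesis using continuous_on_compose2[OF _ f] by blast
qed

lemma Fw0_cont:
  assumes "0 < \<sigma>" "\<sigma> < 1" "\<delta> > 0"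
  shows "continuous_on {0..1} (Fw0 Z h \<sigma> T \<delta>)"
proof -
  have d0: "\<forall>v\<in>{0..1}. \<sigma> + (1 - \<sigma>) * v > 0"
    using assms by (auto intro!: add_pos_nonneg)
  then have d: "\<forall>v\<in>{0..1}. \<sigma> + (1 - \<sigma>) * v \<noteq> 0" by force
  have d2: "\<forall>v\<in>{0..1}. (\<sigma> + (1 - \<sigma>) * v)\<^sup>2 \<noteq> 0" using d by simp
  show ?thesis unfolding Fw0_def[abs_def]
    using assms(3) by (intro continuous_intros cont_H1 cont_D1 d d2) auto
qed

lemma Fw0_bdd:
  assumes "0 < \<sigma>" "\<sigma> < 1" "\<delta> > 0"
  shows "\<exists>M. \<forall>v\<in>{0..1}. Fw0 Z h \<sigma> T \<delta> v \<le> M"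
proof -
  have "bounded (Fw0 Z h \<sigma> T \<delta> ` {0..1})"
    by (rule compact_imp_bounded[OF compact_continuous_image[OF Fw0_cont[OF assms]]]) simp
  then show ?thesis
    by (meson bounded_imp_bdd_above bdd_above.E imageI)
qed

lemma Frate_bounds:
  assumes "\<delta> > 0" "0 < \<sigma>" "\<sigma> < 1" "0 \<le> v" "v \<le> 1" "Z > 0" "0 < h" "h < 1"
  shows "0 \<le> Frate Z h \<sigma> T \<delta> v" "Frate Z h \<sigma> T \<delta> v \<le> exp (Z * (1 - h))"
proof -
  have den: "\<sigma> + (1 - \<sigma>) * v > 0" using assms by (simp add: add_pos_nonneg)
  have "\<sigma> * h \<le> 1 * h" using assms by (intro mult_right_mono) auto
  then have "\<sigma> + h - \<sigma> * h \<ge> 0" using assms by linarith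
  then have "(v - 1) * (\<sigma> + h - \<sigma> * h) \<le> 0"
    using assms by (intro mult_nonpos_nonneg) auto
  moreover have "(1 - h) * (\<sigma> + (1 - \<sigma>) * v) - (v - h) = - ((v - 1) * (\<sigma> + h - \<sigma> * h))" by algebra
  ultimately have "v - h \<le> (1 - h) * (\<sigma> + (1 - \<sigma>) * v)" by linarith
  then have "(v - h) / (\<sigma> + (1 - \<sigma>) * v) \<le> 1 - h" using den by (simp add: divide_le_eq)
  then have "Z * ((v - h) / (\<sigma> + (1 - \<sigma>) * v)) \<le> Z * (1 - h)" using assms by (intro mult_left_mono) auto
  then have e: "exp (Z * (v - h) / (\<sigma> + (1 - \<sigma>) * v)) \<le> exp (Z * (1 - h))" by simp
  show "0 \<le> Frate Z h \<sigma> T \<delta> v" unfolding Frate_eq[OF assms(1)] by (simp add: H1_bounds)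
  have "Frate Z h \<sigma> T \<delta> v \<le> exp (Z * (v - h) / (\<sigma> + (1 - \<sigma>) * v)) * 1"
    unfolding Frate_eq[OF assms(1)] by (intro mult_left_mono H1_bounds) auto
  with e show "Frate Z h \<sigma> T \<delta> v \<le> exp (Z * (1 - h))" by linarith
qed

lemma integrable_no_large_intervals:
  fixes f :: "real \<Rightarrow> 'a::{banach,second_countable_topology}"
  assumes fi: "integrable lborel f" and c: "c > 0"
    and big: "\<And>n::nat. \<exists>a. \<forall>x\<in>{a..a + real n}. c \<le> norm (f x)"
  shows False
proof -
  have *: "c * real n \<le> integral\<^sup>L lborel (\<lambda>x. norm (f x))" for n :: nat
  proof -
    obtain a where a: "\<forall>x\<in>{a..a + real n}. c \<le> norm (f x)" using big by blast
    have "integral\<^sup>L lborel (\<lambda>x. c * indicator {a..a + real n} x) = c * real n"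
      by simp
    moreover have "integral\<^sup>L lborel (\<lambda>x. c * indicator {a..a + real n} x) \<le> integral\<^sup>L lborel (\<lambda>x. norm (f x))"
    proof (rule integral_mono)
      show "integrable lborel (\<lambda>x. c * indicator {a..a + real n} x :: real)" by simp
      show "integrable lborel (\<lambda>x. norm (f x))" using fi by simp
      fix x show "c * indicator {a..a + real n} x \<le> norm (f x)"
        using a by (auto split: split_indicator)
    qed
    ultimately show ?thesis by simp
  qed
  obtain n :: nat where "integral\<^sup>L lborel (\<lambda>x. norm (f x)) / c < real n"
    using reals_Archimedean2 by blast
  then have "integral\<^sup>L lborel (\<lambda>x. norm (f x)) < c * real n" using c by (simp add: field_simps)
  with *[of n] show False by simp
qed

lemma tendsto_norm_lower:
  fixes f :: "real \<Rightarrow> 'a::real_normed_vector"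
  assumes "dist (f x) L < norm L / 2"
  shows "norm L / 2 \<le> norm (f x)"
proof -
  have "norm L - norm (f x) \<le> norm (L - f x)" by (rule norm_triangle_ineq2)
  also have "\<dots> = dist (f x) L" by (simp add: dist_norm norm_minus_commute)
  finally show ?thesis using assms by linarith
qed

lemma lim_zero_top:
  fixes f :: "real \<Rightarrow> 'a::{banach,second_countable_topology}"
  assumes fi: "integrable lborel f" and lim: "(f \<longlongrightarrow> L) at_top"
  shows "L = 0"
proof (rule ccontr)
  assume L: "L \<noteq> 0"
  then have e: "norm L / 2 > 0" by simp
  have "eventually (\<lambda>x. dist (f x) L < norm L / 2) at_top" using tendstoD[OF lim e] .
  then obtain M where M: "\<And>x. x \<ge> M \<Longrightarrow> dist (f x) L < norm L / 2"
    by (auto simp: eventually_at_top_linorder)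
  show False
  proof (rule integrable_no_large_intervals[OF fi e])
    fix n :: nat
    show "\<exists>a. \<forall>x\<in>{a..a + real n}. norm L / 2 \<le> norm (f x)"
    proof (intro exI[of _ M] ballI)
      fix x assume "x \<in> {M..M + real n}"
      then show "norm L / 2 \<le> norm (f x)" by (intro tendsto_norm_lower M) simp
    qed
  qed
qed

lemma lim_zero_bot:
  fixes f :: "real \<Rightarrow> 'a::{banach,second_countable_topology}"
  assumes fi: "integrable lborel f" and lim: "(f \<longlongrightarrow> L) at_bot"
  shows "L = 0"
proof (rule ccontr)
  assume L: "L \<noteq> 0"
  then have e: "norm L / 2 > 0" by simp
  have "eventually (\<lambda>x. dist (f x) L < norm L / 2) at_bot" using tendstoD[OF lim e] .
  then obtain M where M: "\<And>x. x \<le> M \<Longrightarrow> dist (f x) L < norm L / 2"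
    by (auto simp: eventually_at_bot_linorder)
  show False
  proof (rule integrable_no_large_intervals[OF fi e])
    fix n :: nat
    show "\<exists>a. \<forall>x\<in>{a..a + real n}. norm L / 2 \<le> norm (f x)"
    proof (intro exI[of _ "M - real n"] ballI)
      fix x assume "x \<in> {M - real n..M - real n + real n}"
      then show "norm L / 2 \<le> norm (f x)" by (intro tendsto_norm_lower M) simp
    qed
  qed
qed

lemma ftc_lebesgue:
  fixes f f' :: "real \<Rightarrow> complex"
  assumes d: "\<And>x. (f has_vector_derivative f' x) (at x)" and f'i: "integrable lborel f'"
    and ab: "a \<le> b"
  shows "(LINT x:{a..b}|lborel. f' x) = f b - f a"
proof -
  have si: "set_integrable lborel {a..b} f'"
    unfolding set_integrable_def by (rule integrable_mult_indicator) (auto simp: f'i)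
  have "(f' has_integral (f b - f a)) {a..b}"
    by (rule fundamental_theorem_of_calculus[OF ab]) (auto intro: has_vector_derivative_at_within d)
  then show ?thesis
    using set_borel_integral_eq_integral(2)[OF si] by (simp add: integral_unique)
qed

lemma ibp_zero:
  fixes f f' :: "real \<Rightarrow> complex"
  assumes d: "\<And>x. (f has_vector_derivative f' x) (at x)"
    and fi: "integrable lborel f" and f'i: "integrable lborel f'"
  shows "integral\<^sup>L lborel f' = 0"
proof -
  have si: "set_integrable lborel A f'" if "A \<in> sets lborel" for A
    unfolding set_integrable_def by (rule integrable_mult_indicator[OF that f'i])
  have lt: "((\<lambda>b. LINT x:{0..b}|lborel. f' x) \<longlongrightarrow> (LINT x:{0..}|lborel. f' x)) at_top"
    by (rule tendsto_set_lebesgue_integral_at_top) (auto intro: si)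
  have "eventually (\<lambda>b. f 0 + (LINT x:{0..b}|lborel. f' x) = f b) at_top"
    unfolding eventually_at_top_linorder
    by (rule exI[of _ 0]) (auto simp: ftc_lebesgue[OF d f'i])
  then have "(f \<longlongrightarrow> f 0 + (LINT x:{0..}|lborel. f' x)) at_top"
    using Lim_transform_eventually[OF tendsto_add[OF tendsto_const lt]] by blast
  then have top: "f 0 + (LINT x:{0..}|lborel. f' x) = 0" by (rule lim_zero_top[OF fi])
  have lb: "((\<lambda>a. LINT x:{a..0}|lborel. f' x) \<longlongrightarrow> (LINT x:{..0}|lborel. f' x)) at_bot"
    by (rule tendsto_set_lebesgue_integral_at_bot) (auto intro: si)
  have "eventually (\<lambda>a. f 0 - (LINT x:{a..0}|lborel. f' x) = f a) at_bot"
    unfolding eventually_at_bot_linorder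
    by (rule exI[of _ 0]) (auto simp: ftc_lebesgue[OF d f'i])
  then have "(f \<longlongrightarrow> f 0 - (LINT x:{..0}|lborel. f' x)) at_bot"
    using Lim_transform_eventually[OF tendsto_diff[OF tendsto_const lb]] by blast
  then have bot: "f 0 - (LINT x:{..0}|lborel. f' x) = 0" by (rule lim_zero_bot[OF fi])
  have un: "(LINT x:({..0} \<union> {0<..})|lborel. f' x) = (LINT x:{..0}|lborel. f' x) + (LINT x:{0<..}|lborel. f' x)"
    by (rule set_integral_Un) (auto intro: si)
  have eq0: "(LINT x:{0<..}|lborel. f' x) = (LINT x:{0..}|lborel. f' x)"
  proof (rule set_integral_cong_set)
    show "set_borel_measurable lborel {0..} f'" "set_borel_measurable lborel {0<..} f'"
      using si[of "{0..}"] si[of "{0<..}"] unfolding set_integrable_def set_borel_measurable_def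
      by auto
    show "AE x in lborel. ((x::real) \<in> {0..}) = (x \<in> {0<..})"
      by (rule eventually_mono[OF AE_lborel_singleton[of "0::real"]]) auto
  qed
  have "({..0} \<union> {0<..}) = (UNIV :: real set)" by auto
  then have "integral\<^sup>L lborel f' = (LINT x:{..0}|lborel. f' x) + (LINT x:{0..}|lborel. f' x)"
    using un eq0 by (simp add: set_lebesgue_integral_def)
  then show ?thesis using top bot by (simp add: algebra_simps)
qed

lemma prod_integrable:
  fixes f g :: "real \<Rightarrow> complex"
  assumes "f \<in> borel_measurable lborel" "g \<in> borel_measurable lborel"
    "integrable lborel (\<lambda>x. (cmod (f x))\<^sup>2)" "integrable lborel (\<lambda>x. (cmod (g x))\<^sup>2)"
  shows "integrable lborel (\<lambda>x. f x * cnj (g x))"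
proof (rule Bochner_Integration.integrable_bound[where f="\<lambda>x. (cmod (f x))\<^sup>2 + (cmod (g x))\<^sup>2"])
  show "integrable lborel (\<lambda>x. (cmod (f x))\<^sup>2 + (cmod (g x))\<^sup>2)" using assms by simp
  have c: "(cnj :: complex \<Rightarrow> complex) \<in> borel_measurable borel"
    by (intro borel_measurable_continuous_onI continuous_intros)
  have "(\<lambda>x. cnj (g x)) \<in> borel_measurable lborel"
    using measurable_compose[OF assms(2) c] by (simp add: o_def)
  then show "(\<lambda>x. f x * cnj (g x)) \<in> borel_measurable lborel" using assms(1) by measurable
  show "AE x in lborel. norm (f x * cnj (g x)) \<le> norm ((cmod (f x))\<^sup>2 + (cmod (g x))\<^sup>2)"
  proof (rule AE_I2)
    fix x
    have "cmod (f x) * cmod (g x) \<le> (cmod (f x))\<^sup>2 + (cmod (g x))\<^sup>2"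
    proof -
      have "0 \<le> (cmod (f x) - cmod (g x))\<^sup>2" by simp
      then have "2 * (cmod (f x) * cmod (g x)) \<le> (cmod (f x))\<^sup>2 + (cmod (g x))\<^sup>2"
        by (simp add: power2_eq_square algebra_simps)
      moreover have "0 \<le> cmod (f x) * cmod (g x)" by simp
      ultimately show ?thesis by linarith
    qed
    then show "norm (f x * cnj (g x)) \<le> norm ((cmod (f x))\<^sup>2 + (cmod (g x))\<^sup>2)"
      by (simp add: norm_mult)
  qed
qed

lemma H2_facts:
  assumes "H2 p p' p''"
  shows "\<And>x. (p has_vector_derivative p' x) (at x)" "\<And>x. (p' has_vector_derivative p'' x) (at x)"
    "p \<in> borel_measurable lborel" "p' \<in> borel_measurable lborel" "p'' \<in> borel_measurable lborel"
    "integrable lborel (\<lambda>x. (cmod (p x))\<^sup>2)" "integrable lborel (\<lambda>x. (cmod (p' x))\<^sup>2)"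
    "integrable lborel (\<lambda>x. (cmod (p'' x))\<^sup>2)"
  using assms unfolding H2_def by auto

lemma H2_energy:
  assumes H: "H2 p p' p''"
  shows "integral\<^sup>L lborel (\<lambda>x. p'' x * cnj (p x)) = - of_real (integral\<^sup>L lborel (\<lambda>x. (cmod (p' x))\<^sup>2))"
    "Re (integral\<^sup>L lborel (\<lambda>x. p' x * cnj (p x))) = 0"
proof -
  note h = H2_facts[OF H]
  have i1: "integrable lborel (\<lambda>x. p'' x * cnj (p x))" by (rule prod_integrable) (use h in auto)
  have i2: "integrable lborel (\<lambda>x. p' x * cnj (p' x))" by (rule prod_integrable) (use h in auto)
  have i3: "integrable lborel (\<lambda>x. p' x * cnj (p x))" by (rule prod_integrable) (use h in auto)
  have i4: "integrable lborel (\<lambda>x. p x * cnj (p x))" by (rule prod_integrable) (use h in auto)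
  have i5: "integrable lborel (\<lambda>x. p x * cnj (p' x))" by (rule prod_integrable) (use h in auto)
  have "integral\<^sup>L lborel (\<lambda>x. p' x * cnj (p' x) + p'' x * cnj (p x)) = 0"
  proof (rule ibp_zero[OF _ i3])
    fix x
    show "((\<lambda>x. p' x * cnj (p x)) has_vector_derivative p' x * cnj (p' x) + p'' x * cnj (p x)) (at x)"
      by (rule has_vector_derivative_mult[OF h(2) has_vector_derivative_cnj[OF h(1)]])
    show "integrable lborel (\<lambda>x. p' x * cnj (p' x) + p'' x * cnj (p x))" using i1 i2 by simp
  qed
  then have "integral\<^sup>L lborel (\<lambda>x. p' x * cnj (p' x)) + integral\<^sup>L lborel (\<lambda>x. p'' x * cnj (p x)) = 0"
    using i1 i2 by simp
  moreover have e2: "integral\<^sup>L lborel (\<lambda>x. p' x * cnj (p' x)) = of_real (integral\<^sup>L lborel (\<lambda>x. (cmod (p' x))\<^sup>2))"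
  proof -
    have "(\<lambda>x. p' x * cnj (p' x)) = (\<lambda>x. complex_of_real ((cmod (p' x))\<^sup>2))"
      by (rule ext) (simp only: complex_norm_square)
    then have "integral\<^sup>L lborel (\<lambda>x. p' x * cnj (p' x)) = integral\<^sup>L lborel (\<lambda>x. complex_of_real ((cmod (p' x))\<^sup>2))"
      by (simp only:)
    also have "\<dots> = of_real (integral\<^sup>L lborel (\<lambda>x. (cmod (p' x))\<^sup>2))" by (rule integral_complex_of_real)
    finally show ?thesis .
  qed
  ultimately show "integral\<^sup>L lborel (\<lambda>x. p'' x * cnj (p x)) = - of_real (integral\<^sup>L lborel (\<lambda>x. (cmod (p' x))\<^sup>2))"
    by (metis add_eq_0_iff)
  have "integral\<^sup>L lborel (\<lambda>x. p x * cnj (p' x) + p' x * cnj (p x)) = 0"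
  proof (rule ibp_zero[OF _ i4])
    fix x
    show "((\<lambda>x. p x * cnj (p x)) has_vector_derivative p x * cnj (p' x) + p' x * cnj (p x)) (at x)"
      by (rule has_vector_derivative_mult[OF h(1) has_vector_derivative_cnj[OF h(1)]])
    show "integrable lborel (\<lambda>x. p x * cnj (p' x) + p' x * cnj (p x))" using i5 i3 by simp
  qed
  then have "integral\<^sup>L lborel (\<lambda>x. p x * cnj (p' x)) + integral\<^sup>L lborel (\<lambda>x. p' x * cnj (p x)) = 0"
    using i5 i3 by simp
  moreover have "integral\<^sup>L lborel (\<lambda>x. p x * cnj (p' x)) = cnj (integral\<^sup>L lborel (\<lambda>x. p' x * cnj (p x)))"
  proof -
    have "(\<lambda>x. p x * cnj (p' x)) = (\<lambda>x. cnj (p' x * cnj (p x)))"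
      by (rule ext) (simp only: complex_cnj_mult complex_cnj_cnj mult.commute)
    then show ?thesis by (simp only: Bochner_Integration.integral_cnj)
  qed
  ultimately have "cnj (integral\<^sup>L lborel (\<lambda>x. p' x * cnj (p x))) + integral\<^sup>L lborel (\<lambda>x. p' x * cnj (p x)) = 0"
    by simp
  then have "Re (cnj (integral\<^sup>L lborel (\<lambda>x. p' x * cnj (p x))) + integral\<^sup>L lborel (\<lambda>x. p' x * cnj (p x))) = 0"
    by simp
  then show "Re (integral\<^sup>L lborel (\<lambda>x. p' x * cnj (p x))) = 0" by simp
qed

lemma key_ineq1:
  fixes s t u \<alpha> \<beta> A B h :: real
  assumes st: "s \<ge> 0" "t \<ge> 0" and u: "\<bar>u\<bar> \<le> s * t"
    and al: "0 \<le> \<alpha>" "\<alpha> \<le> A" and be: "0 \<le> \<beta>" "\<beta> \<le> B" and h: "0 < h" "h < 1"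
  shows "\<alpha> * (h * s\<^sup>2 + (1 - h) * t\<^sup>2 - u) + \<beta> * (u - t\<^sup>2) \<le> ((3 - 3 * h / 2) * A + B) * (s\<^sup>2 + t\<^sup>2)"
proof -
  define X where "X = h * s\<^sup>2 + (1 - h) * t\<^sup>2 + s * t"
  have sq: "2 * (s * t) \<le> s\<^sup>2 + t\<^sup>2"
  proof -
    have "0 \<le> (s - t)\<^sup>2" by simp
    then show ?thesis by (simp add: power2_eq_square algebra_simps)
  qed
  have stp: "0 \<le> s * t" using st by simp
  have X0: "0 \<le> X" unfolding X_def using st h by (intro add_nonneg_nonneg mult_nonneg_nonneg) auto
  have a1: "\<alpha> * (h * s\<^sup>2 + (1 - h) * t\<^sup>2 - u) \<le> \<alpha> * X"
    unfolding X_def using al u by (intro mult_left_mono) auto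
  have a2: "\<alpha> * X \<le> A * X" using al X0 by (intro mult_right_mono) auto
  have hs: "h * s\<^sup>2 \<le> 1 * s\<^sup>2" using h by (intro mult_right_mono) auto
  have ht: "(1 - h) * t\<^sup>2 \<le> 1 * t\<^sup>2" using h by (intro mult_right_mono) auto
  have a3: "X \<le> 3 / 2 * (s\<^sup>2 + t\<^sup>2)" unfolding X_def using hs ht sq by simp
  have A0: "0 \<le> A" using al by simp
  have a4: "A * X \<le> A * (3 / 2 * (s\<^sup>2 + t\<^sup>2))" using a3 A0 by (intro mult_left_mono) auto
  have a5: "A * (3 / 2 * (s\<^sup>2 + t\<^sup>2)) \<le> (3 - 3 * h / 2) * A * (s\<^sup>2 + t\<^sup>2)"
  proof -
    have "3 / 2 * (A * (s\<^sup>2 + t\<^sup>2)) \<le> (3 - 3 * h / 2) * (A * (s\<^sup>2 + t\<^sup>2))"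
      using h A0 by (intro mult_right_mono) auto
    then show ?thesis by (simp only: mult_ac)
  qed
  have b1: "\<beta> * (u - t\<^sup>2) \<le> \<beta> * s\<^sup>2"
    using be u sq stp by (intro mult_left_mono) auto
  have b2: "\<beta> * s\<^sup>2 \<le> B * (s\<^sup>2 + t\<^sup>2)"
  proof -
    have "\<beta> * s\<^sup>2 \<le> B * s\<^sup>2" using be by (intro mult_right_mono) auto
    also have "\<dots> \<le> B * (s\<^sup>2 + t\<^sup>2)" using be by (intro mult_left_mono) auto
    finally show ?thesis .
  qed
  have "\<alpha> * (h * s\<^sup>2 + (1 - h) * t\<^sup>2 - u) + \<beta> * (u - t\<^sup>2) \<le> (3 - 3 * h / 2) * A * (s\<^sup>2 + t\<^sup>2) + B * (s\<^sup>2 + t\<^sup>2)"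
    using a1 a2 a4 a5 b1 b2 by linarith
  then show ?thesis by (simp add: algebra_simps)
qed

lemma key_ineq2:
  fixes s t u v \<alpha> \<beta> A B h c \<epsilon> e1 e2 w1 w2 :: real
  assumes st: "s \<ge> 0" "t \<ge> 0" and u: "\<bar>u\<bar> \<le> s * t" and v: "\<bar>v\<bar> \<le> s * t"
    and al: "0 \<le> \<alpha>" "\<alpha> \<le> A" and be: "0 \<le> \<beta>" "\<beta> \<le> B" and h: "0 < h" "h < 1"
    and e: "e1 \<ge> 0" "e2 \<ge> 0" and w1: "\<bar>w1\<bar> \<le> e1 * s" and w2: "\<bar>w2\<bar> \<le> e2 * t"
    and c: "c > 0" and eps: "\<epsilon> > 0"
  shows "\<alpha> * (h * s\<^sup>2 + (1 - h) * t\<^sup>2 - u) + \<beta> * (u - t\<^sup>2)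
           + \<bar>(\<alpha> * (2 * h - 1) + \<beta>) * v + c * w1 + c * w2\<bar>
         \<le> e1\<^sup>2 + \<epsilon> * e2\<^sup>2 + (c\<^sup>2 / 4 * max 1 (1 / \<epsilon>) + (3 - h) * A + B) * (s\<^sup>2 + t\<^sup>2)"
proof -
  have sq: "2 * (s * t) \<le> s\<^sup>2 + t\<^sup>2"
  proof -
    have "0 \<le> (s - t)\<^sup>2" by simp
    then show ?thesis by (simp add: power2_eq_square algebra_simps)
  qed
  have stp: "0 \<le> s * t" using st by simp
  have A0: "0 \<le> A" using al by simp
  have i1: "\<bar>(\<alpha> * (2 * h - 1) + \<beta>) * v + c * w1 + c * w2\<bar> \<le> \<bar>\<alpha> * (2 * h - 1) + \<beta>\<bar> * \<bar>v\<bar> + c * \<bar>w1\<bar> + c * \<bar>w2\<bar>"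
    using c by (simp add: abs_mult abs_triangle_ineq order_trans[OF abs_triangle_ineq] add_mono)
  have i2: "\<bar>\<alpha> * (2 * h - 1) + \<beta>\<bar> \<le> \<alpha> + \<beta>"
  proof -
    have "\<bar>2 * h - 1\<bar> \<le> 1" using h by auto
    then have "\<alpha> * \<bar>2 * h - 1\<bar> \<le> \<alpha> * 1" using al by (intro mult_left_mono) auto
    then have "\<bar>\<alpha> * (2 * h - 1)\<bar> \<le> \<alpha>" using al by (simp add: abs_mult)
    then show ?thesis using be by linarith
  qed
  have i3: "\<bar>\<alpha> * (2 * h - 1) + \<beta>\<bar> * \<bar>v\<bar> \<le> (\<alpha> + \<beta>) * (s * t)"
    using i2 v al be by (intro mult_mono) auto
  have i4: "c * \<bar>w1\<bar> \<le> c * (e1 * s)" using c w1 by (intro mult_left_mono) auto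
  have i5: "c * \<bar>w2\<bar> \<le> c * (e2 * t)" using c w2 by (intro mult_left_mono) auto
  have y1: "c * (e1 * s) \<le> e1\<^sup>2 + c\<^sup>2 / 4 * s\<^sup>2"
  proof -
    have "0 \<le> (e1 - c * s / 2)\<^sup>2" by simp
    then show ?thesis by (simp add: power2_eq_square algebra_simps)
  qed
  have y2: "c * (e2 * t) \<le> \<epsilon> * e2\<^sup>2 + c\<^sup>2 / (4 * \<epsilon>) * t\<^sup>2"
  proof -
    have "0 \<le> (2 * \<epsilon> * e2 - c * t)\<^sup>2 / (4 * \<epsilon>)" using eps by simp
    also have "(2 * \<epsilon> * e2 - c * t)\<^sup>2 / (4 * \<epsilon>) = \<epsilon> * e2\<^sup>2 + c\<^sup>2 / (4 * \<epsilon>) * t\<^sup>2 - c * (e2 * t)"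
      using eps by (simp add: power2_eq_square field_simps)
    finally show ?thesis by simp
  qed
  define M where "M = max 1 (1 / \<epsilon>)"
  have y3: "c\<^sup>2 / 4 * s\<^sup>2 + c\<^sup>2 / (4 * \<epsilon>) * t\<^sup>2 \<le> c\<^sup>2 / 4 * M * (s\<^sup>2 + t\<^sup>2)"
  proof -
    have "c\<^sup>2 / 4 * s\<^sup>2 \<le> c\<^sup>2 / 4 * M * s\<^sup>2"
    proof -
      have "1 \<le> M" unfolding M_def by simp
      then have "c\<^sup>2 / 4 * 1 \<le> c\<^sup>2 / 4 * M" by (intro mult_left_mono) auto
      then show ?thesis by (intro mult_right_mono) auto
    qed
    moreover have "c\<^sup>2 / (4 * \<epsilon>) * t\<^sup>2 = c\<^sup>2 / 4 * (1 / \<epsilon>) * t\<^sup>2" by simp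
    moreover have "c\<^sup>2 / 4 * (1 / \<epsilon>) * t\<^sup>2 \<le> c\<^sup>2 / 4 * M * t\<^sup>2"
    proof -
      have "1 / \<epsilon> \<le> M" unfolding M_def by simp
      then have "c\<^sup>2 / 4 * (1 / \<epsilon>) \<le> c\<^sup>2 / 4 * M" by (intro mult_left_mono) auto
      then show ?thesis by (intro mult_right_mono) auto
    qed
    ultimately show ?thesis by (simp add: algebra_simps)
  qed
  define X where "X = h * s\<^sup>2 + (1 - h) * t\<^sup>2 + 2 * (s * t)"
  have X0: "0 \<le> X" unfolding X_def using st h by (intro add_nonneg_nonneg mult_nonneg_nonneg) auto
  have hs: "h * s\<^sup>2 \<le> 1 * s\<^sup>2" using h by (intro mult_right_mono) auto
  have ht: "(1 - h) * t\<^sup>2 \<le> 1 * t\<^sup>2" using h by (intro mult_right_mono) auto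
  have x1: "X \<le> 2 * (s\<^sup>2 + t\<^sup>2)" unfolding X_def using hs ht sq by simp
  have r1: "\<alpha> * (h * s\<^sup>2 + (1 - h) * t\<^sup>2 - u) + \<alpha> * (s * t) \<le> \<alpha> * X"
  proof -
    have "\<alpha> * (h * s\<^sup>2 + (1 - h) * t\<^sup>2 - u) + \<alpha> * (s * t) = \<alpha> * (h * s\<^sup>2 + (1 - h) * t\<^sup>2 - u + s * t)"
      by (simp add: algebra_simps)
    also have "\<dots> \<le> \<alpha> * X" unfolding X_def using al u by (intro mult_left_mono) auto
    finally show ?thesis .
  qed
  have r2: "\<alpha> * X \<le> (3 - h) * A * (s\<^sup>2 + t\<^sup>2)"
  proof -
    have "\<alpha> * X \<le> A * X" using al X0 by (intro mult_right_mono) auto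
    also have "\<dots> \<le> A * (2 * (s\<^sup>2 + t\<^sup>2))" using A0 x1 by (intro mult_left_mono) auto
    also have "\<dots> = 2 * (A * (s\<^sup>2 + t\<^sup>2))" by simp
    also have "\<dots> \<le> (3 - h) * (A * (s\<^sup>2 + t\<^sup>2))" using h A0 by (intro mult_right_mono) auto
    finally show ?thesis by (simp add: algebra_simps)
  qed
  have r3: "\<beta> * (u - t\<^sup>2) + \<beta> * (s * t) \<le> B * (s\<^sup>2 + t\<^sup>2)"
  proof -
    have "\<beta> * (u - t\<^sup>2) + \<beta> * (s * t) = \<beta> * (u - t\<^sup>2 + s * t)" by (simp add: algebra_simps)
    also have "\<dots> \<le> \<beta> * s\<^sup>2" using be u sq by (intro mult_left_mono) auto
    also have "\<dots> \<le> B * s\<^sup>2" using be by (intro mult_right_mono) auto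
    also have "\<dots> \<le> B * (s\<^sup>2 + t\<^sup>2)" using be by (intro mult_left_mono) auto
    finally show ?thesis .
  qed
  have "(\<alpha> + \<beta>) * (s * t) = \<alpha> * (s * t) + \<beta> * (s * t)" by (simp add: algebra_simps)
  then have "\<alpha> * (h * s\<^sup>2 + (1 - h) * t\<^sup>2 - u) + \<beta> * (u - t\<^sup>2)
           + \<bar>(\<alpha> * (2 * h - 1) + \<beta>) * v + c * w1 + c * w2\<bar>
         \<le> e1\<^sup>2 + \<epsilon> * e2\<^sup>2 + c\<^sup>2 / 4 * M * (s\<^sup>2 + t\<^sup>2) + (3 - h) * A * (s\<^sup>2 + t\<^sup>2) + B * (s\<^sup>2 + t\<^sup>2)"
    using i1 i3 i4 i5 y1 y2 y3 r1 r2 r3 by linarith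
  then show ?thesis unfolding M_def by (simp add: algebra_simps)
qed

lemma rho_parts:
  fixes P Q :: complex and \<alpha> \<beta> h :: real
  shows "Re ((of_real \<alpha> * (of_real h * P - of_real (1 - h) * Q) + of_real \<beta> * Q) * (cnj P - cnj Q))
          = \<alpha> * (h * (cmod P)\<^sup>2 + (1 - h) * (cmod Q)\<^sup>2 - Re (Q * cnj P)) + \<beta> * (Re (Q * cnj P) - (cmod Q)\<^sup>2)"
    "Im ((of_real \<alpha> * (of_real h * P - of_real (1 - h) * Q) + of_real \<beta> * Q) * (cnj P - cnj Q))
          = (\<alpha> * (2 * h - 1) + \<beta>) * Im (Q * cnj P)"
proof -
  obtain a b where P: "P = Complex a b" by (cases P)
  obtain c d where Q: "Q = Complex c d" by (cases Q)
  show "Re ((of_real \<alpha> * (of_real h * P - of_real (1 - h) * Q) + of_real \<beta> * Q) * (cnj P - cnj Q))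
          = \<alpha> * (h * (cmod P)\<^sup>2 + (1 - h) * (cmod Q)\<^sup>2 - Re (Q * cnj P)) + \<beta> * (Re (Q * cnj P) - (cmod Q)\<^sup>2)"
    unfolding P Q cmod_power2 by (simp add: algebra_simps power2_eq_square)
  show "Im ((of_real \<alpha> * (of_real h * P - of_real (1 - h) * Q) + of_real \<beta> * Q) * (cnj P - cnj Q))
          = (\<alpha> * (2 * h - 1) + \<beta>) * Im (Q * cnj P)"
    unfolding P Q by (simp add: algebra_simps)
qed

lemma pos_integral_cont:
  fixes f :: "real \<Rightarrow> real"
  assumes c: "\<And>x. isCont f x" and nn: "\<And>x. f x \<ge> 0" and fi: "integrable lborel f" and x0: "f x0 > 0"
  shows "integral\<^sup>L lborel f > 0"
proof -
  have "f \<midarrow>x0\<rightarrow> f x0" using c[of x0] by (simp add: isCont_def)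
  from LIM_D[OF this, of "f x0 / 2"] x0 obtain d where d: "d > 0"
    and dd: "\<And>x. x \<noteq> x0 \<Longrightarrow> norm (x - x0) < d \<Longrightarrow> norm (f x - f x0) < f x0 / 2" by auto
  have low: "f x0 / 2 \<le> f x" if "x \<in> {x0 - d/2..x0 + d/2}" for x
  proof (cases "x = x0")
    case True then show ?thesis using x0 by simp
  next
    case False
    have "norm (x - x0) < d" using that d by auto
    then have "norm (f x - f x0) < f x0 / 2" using dd False by blast
    then have "\<bar>f x - f x0\<bar> < f x0 / 2" by simp
    moreover have "f x0 - f x \<le> \<bar>f x - f x0\<bar>"
      using abs_ge_self[of "f x0 - f x"] abs_minus_commute[of "f x0" "f x"] by linarith
    ultimately show ?thesis by linarith
  qed
  have "integral\<^sup>L lborel (\<lambda>x. f x0 / 2 * indicator {x0 - d/2..x0 + d/2} x) \<le> integral\<^sup>L lborel f"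
  proof (rule integral_mono)
    show "integrable lborel (\<lambda>x. f x0 / 2 * indicator {x0 - d/2..x0 + d/2} x :: real)"
      using d by (intro integrable_mult_right integrable_real_indicator) auto
    show "integrable lborel f" by (rule fi)
    fix x show "f x0 / 2 * indicator {x0 - d/2..x0 + d/2} x \<le> f x"
      using low[of x] nn[of x] by (auto split: split_indicator)
  qed
  moreover have "integral\<^sup>L lborel (\<lambda>x. f x0 / 2 * indicator {x0 - d/2..x0 + d/2} x) = f x0 / 2 * d"
    using d by simp
  moreover have "f x0 / 2 * d > 0" using d x0 by simp
  ultimately show ?thesis by linarith
qed

theorem theorem4p3:
  fixes \<epsilon> h Z \<sigma> Tign \<delta> c :: real
    and u u' u'' y y' y'' :: "real \<Rightarrow> real"
    and lam :: complex
  assumes eps: "0 < \<epsilon>" "\<epsilon> < 1"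
    and hh: "0 < h" "h < 1"
    and ZZ: "0 < Z"
    and sig: "0 < \<sigma>" "\<sigma> < 1"
    and Tig: "0 < Tign" "0 < \<delta>" "Tign + 2 * \<delta> < 1"
    and cpos: "0 < c"
    and du: "\<And>x. (u has_real_derivative u' x) (at x)" "\<And>x. (u' has_real_derivative u'' x) (at x)"
    and dy: "\<And>x. (y has_real_derivative y' x) (at x)" "\<And>x. (y' has_real_derivative y'' x) (at x)"
    and equ: "\<And>x. u'' x + c * u' x
                 + y x * Frate Z h \<sigma> Tign \<delta> (h * u x + (1 - h) * (1 - y x)) = 0"
    and eqy: "\<And>x. \<epsilon> * y'' x + c * y' x
                 - y x * Frate Z h \<sigma> Tign \<delta> (h * u x + (1 - h) * (1 - y x)) = 0"
    and limbot: "(u \<longlongrightarrow> 1) at_bot" "(y \<longlongrightarrow> 0) at_bot"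
    and limtop: "(u \<longlongrightarrow> 0) at_top" "(y \<longlongrightarrow> 1) at_top"
    and ybd: "\<And>x. 0 \<le> y x \<and> y x \<le> 1"
    and wbd: "\<And>x. 0 \<le> h * u x + (1 - h) * (1 - y x) \<and> h * u x + (1 - h) * (1 - y x) \<le> 1"
    and lam: "lam \<noteq> 0" "0 \<le> Re lam"
    and eig: "\<exists>p p' p'' q q' q''. H2 p p' p'' \<and> H2 q q' q'' \<and> (\<exists>x. p x \<noteq> 0 \<or> q x \<noteq> 0) \<and>
       (\<forall>x. let w = h * u x + (1 - h) * (1 - y x);
                 a = complex_of_real (Fw Z h \<sigma> Tign \<delta> w * y x);
                 b = complex_of_real (Frate Z h \<sigma> Tign \<delta> w)
             in lam * p x = p'' x + of_real c * p' x
                             + a * (of_real h * p x - of_real (1 - h) * q x) + b * q x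
              \<and> lam * q x = of_real \<epsilon> * q'' x + of_real c * q' x
                             - a * (of_real h * p x - of_real (1 - h) * q x) - b * q x)"
  shows "Re lam \<le> (3 - 3 * h / 2)
            * (SUP x. Fw Z h \<sigma> Tign \<delta> (h * u x + (1 - h) * (1 - y x)) * y x)
            + exp (Z * (1 - h))
         \<and> cmod lam \<le> c\<^sup>2 / 4 * max 1 (1 / \<epsilon>)
            + (3 - h) * (SUP x. Fw Z h \<sigma> Tign \<delta> (h * u x + (1 - h) * (1 - y x)) * y x)
            + exp (Z * (1 - h))"
proof -
  obtain p p' p'' q q' q'' where Hp: "H2 p p' p''" and Hq: "H2 q q' q''"
    and nz: "\<exists>x. p x \<noteq> 0 \<or> q x \<noteq> 0"
    and eqs: "\<forall>x. let w = h * u x + (1 - h) * (1 - y x);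
                 a = complex_of_real (Fw Z h \<sigma> Tign \<delta> w * y x);
                 b = complex_of_real (Frate Z h \<sigma> Tign \<delta> w)
             in lam * p x = p'' x + of_real c * p' x
                             + a * (of_real h * p x - of_real (1 - h) * q x) + b * q x
              \<and> lam * q x = of_real \<epsilon> * q'' x + of_real c * q' x
                             - a * (of_real h * p x - of_real (1 - h) * q x) - b * q x"
    using eig by blast
  define w where "w x = h * u x + (1 - h) * (1 - y x)" for x
  define a where "a x = Fw Z h \<sigma> Tign \<delta> (w x) * y x" for x
  define b where "b x = Frate Z h \<sigma> Tign \<delta> (w x)" for x
  define A where "A = (SUP x. Fw Z h \<sigma> Tign \<delta> (h * u x + (1 - h) * (1 - y x)) * y x)"
  define B where "B = exp (Z * (1 - h))"
  have Aeq: "A = (SUP x. a x)" unfolding A_def a_def w_def ..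
  have w0: "0 \<le> w x" and w1: "w x \<le> 1" for x using wbd[of x] unfolding w_def by auto
  have a_eq: "a x = Fw0 Z h \<sigma> Tign \<delta> (w x) * y x" for x
    using Fw_eq[OF Tig(2) sig w0[of x]] unfolding a_def by simp
  have F0: "0 \<le> Fw0 Z h \<sigma> Tign \<delta> (w x)" for x
    by (rule Fw0_nonneg[OF Tig(2) sig w0 ZZ hh])
  have a0: "0 \<le> a x" for x unfolding a_eq using F0[of x] ybd[of x] by simp
  obtain M where M: "\<forall>v\<in>{0..1}. Fw0 Z h \<sigma> Tign \<delta> v \<le> M" using Fw0_bdd[OF sig Tig(2)] by blast
  have aM: "a x \<le> M" for x
  proof -
    have "a x \<le> Fw0 Z h \<sigma> Tign \<delta> (w x) * 1" unfolding a_eq using F0[of x] ybd[of x]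
      by (intro mult_left_mono) auto
    also have "\<dots> \<le> M" using M w0[of x] w1[of x] by auto
    finally show ?thesis .
  qed
  have bdd: "bdd_above (range a)" using aM by (intro bdd_aboveI) auto
  have aA: "a x \<le> A" for x unfolding Aeq by (rule cSUP_upper[OF UNIV_I bdd])
  have b0: "0 \<le> b x" and bB: "b x \<le> B" for x
    unfolding b_def B_def using Frate_bounds[OF Tig(2) sig w0[of x] w1[of x] ZZ hh] by auto
  define r where "r x = complex_of_real (a x) * (of_real h * p x - of_real (1 - h) * q x) + complex_of_real (b x) * q x" for x
  have E: "lam * p x = p'' x + of_real c * p' x + r x \<and> lam * q x = of_real \<epsilon> * q'' x + of_real c * q' x - r x" for x
    using eqs[rule_format, of x] unfolding r_def a_def b_def w_def Let_def by (simp add: algebra_simps)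
  note hp = H2_facts[OF Hp] and hq = H2_facts[OF Hq]
  have ipp: "integrable lborel (\<lambda>x. p x * cnj (p x))" by (rule prod_integrable) (use hp in auto)
  have iqq: "integrable lborel (\<lambda>x. q x * cnj (q x))" by (rule prod_integrable) (use hq in auto)
  have ip1: "integrable lborel (\<lambda>x. p' x * cnj (p x))" by (rule prod_integrable) (use hp in auto)
  have iq1: "integrable lborel (\<lambda>x. q' x * cnj (q x))" by (rule prod_integrable) (use hq in auto)
  have ip2: "integrable lborel (\<lambda>x. p'' x * cnj (p x))" by (rule prod_integrable) (use hp in auto)
  have iq2: "integrable lborel (\<lambda>x. q'' x * cnj (q x))" by (rule prod_integrable) (use hq in auto)
  define Np where "Np = integral\<^sup>L lborel (\<lambda>x. (cmod (p x))\<^sup>2)"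
  define Nq where "Nq = integral\<^sup>L lborel (\<lambda>x. (cmod (q x))\<^sup>2)"
  define P1 where "P1 = integral\<^sup>L lborel (\<lambda>x. (cmod (p' x))\<^sup>2)"
  define Q1 where "Q1 = integral\<^sup>L lborel (\<lambda>x. (cmod (q' x))\<^sup>2)"
  define Jp where "Jp = integral\<^sup>L lborel (\<lambda>x. p' x * cnj (p x))"
  define Jq where "Jq = integral\<^sup>L lborel (\<lambda>x. q' x * cnj (q x))"
  have nrm: "integral\<^sup>L lborel (\<lambda>x. f x * cnj (f x)) = of_real (integral\<^sup>L lborel (\<lambda>x. (cmod (f x))\<^sup>2))"
    for f :: "real \<Rightarrow> complex"
  proof -
    have "(\<lambda>x. f x * cnj (f x)) = (\<lambda>x. complex_of_real ((cmod (f x))\<^sup>2))"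
      by (rule ext) (simp only: complex_norm_square)
    then have "integral\<^sup>L lborel (\<lambda>x. f x * cnj (f x)) = integral\<^sup>L lborel (\<lambda>x. complex_of_real ((cmod (f x))\<^sup>2))"
      by (simp only:)
    also have "\<dots> = of_real (integral\<^sup>L lborel (\<lambda>x. (cmod (f x))\<^sup>2))" by (rule integral_complex_of_real)
    finally show ?thesis .
  qed
  have Ip: "integral\<^sup>L lborel (\<lambda>x. p'' x * cnj (p x)) = - of_real P1" unfolding P1_def by (rule H2_energy(1)[OF Hp])
  have Iq: "integral\<^sup>L lborel (\<lambda>x. q'' x * cnj (q x)) = - of_real Q1" unfolding Q1_def by (rule H2_energy(1)[OF Hq])
  have ReJp: "Re Jp = 0" unfolding Jp_def by (rule H2_energy(2)[OF Hp])
  have ReJq: "Re Jq = 0" unfolding Jq_def by (rule H2_energy(2)[OF Hq])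
  define \<rho> where "\<rho> x = r x * (cnj (p x) - cnj (q x))" for x
  have \<rho>_alt: "\<rho> x = lam * (p x * cnj (p x) + q x * cnj (q x))
     - (p'' x * cnj (p x) + of_real \<epsilon> * (q'' x * cnj (q x)) + of_real c * (p' x * cnj (p x) + q' x * cnj (q x)))" for x
  proof -
    have r1: "r x = lam * p x - p'' x - of_real c * p' x" using E[of x] by (simp add: algebra_simps)
    have r2: "r x = of_real \<epsilon> * q'' x + of_real c * q' x - lam * q x" using E[of x] by (simp add: algebra_simps)
    have "\<rho> x = r x * cnj (p x) - r x * cnj (q x)" unfolding \<rho>_def by (simp add: right_diff_distrib)
    also have "\<dots> = (lam * p x - p'' x - of_real c * p' x) * cnj (p x) - (of_real \<epsilon> * q'' x + of_real c * q' x - lam * q x) * cnj (q x)"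
      using arg_cong2[OF r1 r2, of "\<lambda>a b. a * cnj (p x) - b * cnj (q x)"] by simp
    also have "\<dots> = lam * (p x * cnj (p x) + q x * cnj (q x))
     - (p'' x * cnj (p x) + of_real \<epsilon> * (q'' x * cnj (q x)) + of_real c * (p' x * cnj (p x) + q' x * cnj (q x)))"
      by (simp add: algebra_simps)
    finally show ?thesis .
  qed
  have \<rho>_fun: "\<rho> = (\<lambda>x. lam * (p x * cnj (p x) + q x * cnj (q x))
     - (p'' x * cnj (p x) + of_real \<epsilon> * (q'' x * cnj (q x)) + of_real c * (p' x * cnj (p x) + q' x * cnj (q x))))"
    by (rule ext) (rule \<rho>_alt)
  have i\<rho>: "integrable lborel \<rho>"
    unfolding \<rho>_fun using ipp iqq ip1 iq1 ip2 iq2 by (intro Bochner_Integration.integrable_diff Bochner_Integration.integrable_add Bochner_Integration.integrable_mult_right) auto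
  define S where "S = integral\<^sup>L lborel \<rho>"
  have Seq: "S = lam * (of_real Np + of_real Nq) - (- of_real P1 + of_real \<epsilon> * (- of_real Q1) + of_real c * (Jp + Jq))"
  proof -
    have "S = lam * (integral\<^sup>L lborel (\<lambda>x. p x * cnj (p x)) + integral\<^sup>L lborel (\<lambda>x. q x * cnj (q x)))
       - (integral\<^sup>L lborel (\<lambda>x. p'' x * cnj (p x)) + of_real \<epsilon> * integral\<^sup>L lborel (\<lambda>x. q'' x * cnj (q x))
          + of_real c * (integral\<^sup>L lborel (\<lambda>x. p' x * cnj (p x)) + integral\<^sup>L lborel (\<lambda>x. q' x * cnj (q x))))"
      unfolding S_def \<rho>_fun using ipp iqq ip1 iq1 ip2 iq2
      by (simp add: Bochner_Integration.integral_diff Bochner_Integration.integral_add Bochner_Integration.integrable_diff Bochner_Integration.integrable_add Bochner_Integration.integrable_mult_right)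
    then show ?thesis unfolding Ip Iq nrm Np_def Nq_def Jp_def Jq_def .
  qed
  have ReS: "Re S = integral\<^sup>L lborel (\<lambda>x. Re (\<rho> x))" unfolding S_def using integral_Re[OF i\<rho>] by simp
  have ImS: "Im S = integral\<^sup>L lborel (\<lambda>x. Im (\<rho> x))" unfolding S_def using integral_Im[OF i\<rho>] by simp
  have ImJp: "Im Jp = integral\<^sup>L lborel (\<lambda>x. Im (p' x * cnj (p x)))" unfolding Jp_def using integral_Im[OF ip1] by simp
  have ImJq: "Im Jq = integral\<^sup>L lborel (\<lambda>x. Im (q' x * cnj (q x)))" unfolding Jq_def using integral_Im[OF iq1] by simp
  define N where "N = Np + Nq"
  have ReEq: "Re lam * N = Re S - P1 - \<epsilon> * Q1"
    using arg_cong[OF Seq, of Re] ReJp ReJq unfolding N_def by (simp add: algebra_simps)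
  have ImEq: "Im lam * N = Im S + c * Im Jp + c * Im Jq"
    using arg_cong[OF Seq, of Im] unfolding N_def by (simp add: algebra_simps)
  have nnP: "0 \<le> P1" unfolding P1_def by simp
  have nnQ: "0 \<le> Q1" unfolding Q1_def by simp
  define n where "n x = (cmod (p x))\<^sup>2 + (cmod (q x))\<^sup>2" for x
  have inn: "integrable lborel n" unfolding n_def[abs_def] using hp(6) hq(6) by simp
  have Nint: "integral\<^sup>L lborel n = N" unfolding N_def Np_def Nq_def n_def[abs_def] using hp(6) hq(6) by simp
  have Npos: "N > 0"
  proof -
    obtain x0 where x0: "p x0 \<noteq> 0 \<or> q x0 \<noteq> 0" using nz by blast
    have cp: "isCont p x" for x using has_vector_derivative_continuous[OF hp(1)[of x]] .
    have cq: "isCont q x" for x using has_vector_derivative_continuous[OF hq(1)[of x]] .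
    have "integral\<^sup>L lborel n > 0"
    proof (rule pos_integral_cont[OF _ _ inn])
      show "isCont n x" for x unfolding n_def[abs_def] using cp[of x] cq[of x] by (intro continuous_intros)
      show "0 \<le> n x" for x unfolding n_def by simp
      show "0 < n x0" unfolding n_def using x0 by (auto intro: add_pos_nonneg add_nonneg_pos)
    qed
    then show ?thesis using Nint by simp
  qed
  define K1 where "K1 = (3 - 3 * h / 2) * A + B"
  define K2 where "K2 = c\<^sup>2 / 4 * max 1 (1 / \<epsilon>) + (3 - h) * A + B"
  have uv: "\<bar>Re (q x * cnj (p x))\<bar> \<le> cmod (p x) * cmod (q x)" "\<bar>Im (q x * cnj (p x))\<bar> \<le> cmod (p x) * cmod (q x)" for x
    using abs_Re_le_cmod[of "q x * cnj (p x)"] abs_Im_le_cmod[of "q x * cnj (p x)"]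
    by (simp_all add: norm_mult mult.commute)
  have w12: "\<bar>Im (p' x * cnj (p x))\<bar> \<le> cmod (p' x) * cmod (p x)" "\<bar>Im (q' x * cnj (q x))\<bar> \<le> cmod (q' x) * cmod (q x)" for x
    using abs_Im_le_cmod[of "p' x * cnj (p x)"] abs_Im_le_cmod[of "q' x * cnj (q x)"]
    by (simp_all add: norm_mult)
  have Re\<rho>: "Re (\<rho> x) = a x * (h * (cmod (p x))\<^sup>2 + (1 - h) * (cmod (q x))\<^sup>2 - Re (q x * cnj (p x)))
      + b x * (Re (q x * cnj (p x)) - (cmod (q x))\<^sup>2)" for x
    unfolding \<rho>_def r_def by (rule rho_parts(1))
  have Im\<rho>: "Im (\<rho> x) = (a x * (2 * h - 1) + b x) * Im (q x * cnj (p x))" for x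
    unfolding \<rho>_def r_def by (rule rho_parts(2))
  have pt1: "Re (\<rho> x) \<le> K1 * n x" for x
    unfolding Re\<rho> K1_def n_def
    by (rule key_ineq1[OF _ _ uv(1) a0 aA b0 bB hh]) simp_all
  have iRe: "integrable lborel (\<lambda>x. Re (\<rho> x))" by (rule integrable_Re[OF i\<rho>])
  have "integral\<^sup>L lborel (\<lambda>x. Re (\<rho> x)) \<le> integral\<^sup>L lborel (\<lambda>x. K1 * n x)"
    by (rule integral_mono[OF iRe _ pt1]) (use inn in simp)
  also have "\<dots> = K1 * N" using Nint by simp
  finally have R1: "integral\<^sup>L lborel (\<lambda>x. Re (\<rho> x)) \<le> K1 * N" .
  have "Re lam * N \<le> K1 * N" using ReEq ReS R1 nnP nnQ eps by (smt (verit) mult_nonneg_nonneg)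
  then have part1: "Re lam \<le> K1" using Npos by simp
  define II where "II x = Im (\<rho> x) + c * Im (p' x * cnj (p x)) + c * Im (q' x * cnj (q x))" for x
  have iIm1: "integrable lborel (\<lambda>x. Im (p' x * cnj (p x)))" by (rule integrable_Im[OF ip1])
  have iIm2: "integrable lborel (\<lambda>x. Im (q' x * cnj (q x)))" by (rule integrable_Im[OF iq1])
  have iIm\<rho>: "integrable lborel (\<lambda>x. Im (\<rho> x))" by (rule integrable_Im[OF i\<rho>])
  have iII: "integrable lborel II" unfolding II_def[abs_def] using iIm1 iIm2 iIm\<rho> by simp
  have IIint: "integral\<^sup>L lborel II = Im lam * N"
    unfolding II_def[abs_def] ImEq ImS ImJp ImJq using iIm1 iIm2 iIm\<rho> by simp
  have absIm: "\<bar>Im lam\<bar> * N \<le> integral\<^sup>L lborel (\<lambda>x. \<bar>II x\<bar>)"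
  proof -
    have "\<bar>integral\<^sup>L lborel II\<bar> \<le> integral\<^sup>L lborel (\<lambda>x. \<bar>II x\<bar>)"
      by (rule integral_abs_bound_integral[OF iII]) (use iII in auto)
    then show ?thesis using IIint Npos by (simp add: abs_mult)
  qed
  have pt2: "Re (\<rho> x) + \<bar>II x\<bar> \<le> (cmod (p' x))\<^sup>2 + \<epsilon> * (cmod (q' x))\<^sup>2 + K2 * n x" for x
    unfolding Re\<rho> II_def Im\<rho> K2_def n_def
    by (rule key_ineq2[OF _ _ uv(1) uv(2) a0 aA b0 bB hh _ _ w12(1) w12(2) cpos eps(1)]) simp_all
  have "integral\<^sup>L lborel (\<lambda>x. Re (\<rho> x) + \<bar>II x\<bar>) \<le>
        integral\<^sup>L lborel (\<lambda>x. (cmod (p' x))\<^sup>2 + \<epsilon> * (cmod (q' x))\<^sup>2 + K2 * n x)"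
    by (rule integral_mono[OF _ _ pt2]) (use iRe iII inn hp(7) hq(7) in simp_all)
  also have "\<dots> = P1 + \<epsilon> * Q1 + K2 * N"
    unfolding P1_def Q1_def using Nint inn hp(7) hq(7) by simp
  finally have R2: "integral\<^sup>L lborel (\<lambda>x. Re (\<rho> x)) + integral\<^sup>L lborel (\<lambda>x. \<bar>II x\<bar>) \<le> P1 + \<epsilon> * Q1 + K2 * N"
    using iRe iII by simp
  have "(Re lam + \<bar>Im lam\<bar>) * N \<le> K2 * N"
    using ReEq ReS R2 absIm by (simp add: algebra_simps)
  then have "Re lam + \<bar>Im lam\<bar> \<le> K2" using Npos by simp
  moreover have "cmod lam \<le> \<bar>Re lam\<bar> + \<bar>Im lam\<bar>" by (rule cmod_le)
  ultimately have part2: "cmod lam \<le> K2" using lam(2) by simp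
  show ?thesis using part1 part2 unfolding K1_def K2_def A_def B_def by simp
qed

end
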